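(* For every $j\in\{1,\dots,N\}$ with $S_j\neq\emptyset$ (i.e. $S_j=(U_j^*,c_j^* )$), we have $\sum_{(U,c)\in S^*_{j-1}}p_1^{(j)}(U,c)\ge p_2^{(j-1)}(U_j^*,c_j^* )$.
   Context: Setup as for problem (P1): users $\{1,\dots,K\}$ partitioned into groups $\mathcal G_1,\dots,\mathcal G_L$; $N$ RBs; chunks are vectors $c\in\{0,1\}^N$ whose ones form a nonempty contiguous block, ${\rm Tail}(c)$ the last index of $c$, chunks intersect if they share an index; $\mathcal U$ = nonempty $U\subseteq\{1,\dots,K\}$ with $|U|\le T$, $|U\cap\mathcal G_s|\le1\ \forall s$; pairs are elements of $\mathcal U\times\mathcal C$. Metrics $p\ge0$; weights $\beta^q\in[0,1]$ ($q=1,\dots,J$); binary weights $\alpha^q\in\{0,1\}$ ($q\in\mathcal I$). A set $F$ of pairs is feasible if each group meets $U$ for at most one element of $F$, each RB lies in $c$ for at most one element, $\sum_F\beta^q\le1$ ($q\le J$) and $\sum_F\alpha^q\le1$ ($q\in\mathcal I$). Pairs $(U,c),(U',c')$ conflict if some group meets both $U,U'$, or $c,c'$ intersect, or some $q\in\mathcal I$ has $\alpha^q(U,c)=\alpha^q(U',c')=1$. $\mathcal M^{\rm narrow}$ = pairs with $\beta^q\le1/2$ for all $q\le J$; $\max_q\beta^q:=0$ if $J=0$; $(x)^+=\max\{x,0\}$. Recursion: $p_2^{(0)}=p$ on $\mathcal M^{\rm narrow}$. For $j=1,\dots,N$: let $(U_j^*,c_j^* )$ maximize $p_2^{(j-1)}$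 over pairs of $\mathcal M^{\rm narrow}$ with ${\rm Tail}(c)=j$; set $S_j=(U_j^*,c_j^* )$ if $p_2^{(j-1)}(U_j^*,c_j^* )>0$ and $S_j=\emptyset$ otherwise. Define, for $(U,c)\in\mathcal M^{\rm narrow}$, $p_1^{(j)}(U,c)=(p_2^{(j-1)}(U_j^*,c_j^* ))^+\mathbf 1[p_2^{(j-1)}(U,c)>0]$ if $(U,c)$ conflicts with $(U_j^*,c_j^* )$, and $p_1^{(j)}(U,c)=2(p_2^{(j-1)}(U_j^*,c_j^* ))^+\mathbf 1[p_2^{(j-1)}(U,c)>0]\max_{q\le J}\beta^q(U,c)$ otherwise; and $p_2^{(j)}=p_2^{(j-1)}-p_1^{(j)}$. Stacks: $S_N^*=\emptyset$ and for $j=N,\dots,1$, $S_{j-1}^*=S_j^*\cup\{S_j\}$ if $S_j\neq\emptyset$ and $S_j^*\cup\{S_j\}$ is feasible, else $S_{j-1}^*=S_j^*$. *)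

theory Defs
  imports Complex_Main
begin

text \<open>A pair is (U, c): U a set of users, c a chunk, represented by the set of
  RB indices where the 0/1 vector c equals one.\<close>
type_synonym pair = "nat set \<times> nat set"

definition chunks :: "nat \<Rightarrow> nat set set" where
  "chunks N = {{a..b} | a b. 1 \<le> a \<and> a \<le> b \<and> b \<le> N}"

definition Tail :: "nat set \<Rightarrow> nat" where
  "Tail c = Max c"

definition Uset :: "nat \<Rightarrow> nat \<Rightarrow> (nat \<Rightarrow> nat set) \<Rightarrow> nat \<Rightarrow> nat set set" where
  "Uset K L G T = {U. U \<noteq> {} \<and> U \<subseteq> {1..K} \<and> card U \<le> T \<and> (\<forall>s\<in>{1..L}. card (U \<inter> G s) \<le> 1)}"

definition pairs :: "nat \<Rightarrow> nat \<Rightarrow> (nat \<Rightarrow> nat set) \<Rightarrow> nat \<Rightarrow> nat \<Rightarrow> pair set" where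
  "pairs K L G T N = Uset K L G T \<times> chunks N"

definition narrow :: "nat \<Rightarrow> nat \<Rightarrow> (nat \<Rightarrow> nat set) \<Rightarrow> nat \<Rightarrow> nat \<Rightarrow> nat \<Rightarrow> (nat \<Rightarrow> pair \<Rightarrow> real) \<Rightarrow> pair set" where
  "narrow K L G T N J \<beta> = {x \<in> pairs K L G T N. \<forall>q\<in>{1..J}. \<beta> q x \<le> 1/2}"

definition maxbeta :: "nat \<Rightarrow> (nat \<Rightarrow> pair \<Rightarrow> real) \<Rightarrow> pair \<Rightarrow> real" where
  "maxbeta J \<beta> x = (if J = 0 then 0 else Max ((\<lambda>q. \<beta> q x) ` {1..J}))"

definition conflict :: "nat \<Rightarrow> (nat \<Rightarrow> nat set) \<Rightarrow> nat set \<Rightarrow> (nat \<Rightarrow> pair \<Rightarrow> real) \<Rightarrow> pair \<Rightarrow> pair \<Rightarrow> bool" where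
  "conflict L G I \<alpha> x y \<longleftrightarrow>
     (\<exists>s\<in>{1..L}. G s \<inter> fst x \<noteq> {} \<and> G s \<inter> fst y \<noteq> {})
     \<or> snd x \<inter> snd y \<noteq> {}
     \<or> (\<exists>q\<in>I. \<alpha> q x = 1 \<and> \<alpha> q y = 1)"

definition feasible :: "nat \<Rightarrow> (nat \<Rightarrow> nat set) \<Rightarrow> nat \<Rightarrow> nat \<Rightarrow> (nat \<Rightarrow> pair \<Rightarrow> real)
    \<Rightarrow> nat set \<Rightarrow> (nat \<Rightarrow> pair \<Rightarrow> real) \<Rightarrow> pair set \<Rightarrow> bool" where
  "feasible L G N J \<beta> I \<alpha> F \<longleftrightarrow>
     (\<forall>s\<in>{1..L}. card {x\<in>F. G s \<inter> fst x \<noteq> {}} \<le> 1)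
     \<and> (\<forall>r\<in>{1..N}. card {x\<in>F. r \<in> snd x} \<le> 1)
     \<and> (\<forall>q\<in>{1..J}. (\<Sum>x\<in>F. \<beta> q x) \<le> 1)
     \<and> (\<forall>q\<in>I. (\<Sum>x\<in>F. \<alpha> q x) \<le> 1)"

text \<open>The recursion. sel j is the chosen maximizer (U_j^*, c_j^*).
  p2 ... sel j = p_2^{(j)}.\<close>
primrec p2 :: "nat \<Rightarrow> (nat \<Rightarrow> nat set) \<Rightarrow> nat set \<Rightarrow> (nat \<Rightarrow> pair \<Rightarrow> real) \<Rightarrow> nat
    \<Rightarrow> (nat \<Rightarrow> pair \<Rightarrow> real) \<Rightarrow> (pair \<Rightarrow> real) \<Rightarrow> (nat \<Rightarrow> pair) \<Rightarrow> nat \<Rightarrow> pair \<Rightarrow> real" where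
  "p2 L G I \<alpha> J \<beta> p sel 0 x = p x"
| "p2 L G I \<alpha> J \<beta> p sel (Suc j) x =
     p2 L G I \<alpha> J \<beta> p sel j x -
     (let m = max (p2 L G I \<alpha> J \<beta> p sel j (sel (Suc j))) 0 in
      if p2 L G I \<alpha> J \<beta> p sel j x > 0 then
        (if conflict L G I \<alpha> x (sel (Suc j)) then m else 2 * m * maxbeta J \<beta> x)
      else 0)"

text \<open>p1 ... sel j = p_1^{(j)} for j \<ge> 1.\<close>
definition p1 :: "nat \<Rightarrow> (nat \<Rightarrow> nat set) \<Rightarrow> nat set \<Rightarrow> (nat \<Rightarrow> pair \<Rightarrow> real) \<Rightarrow> nat
    \<Rightarrow> (nat \<Rightarrow> pair \<Rightarrow> real) \<Rightarrow> (pair \<Rightarrow> real) \<Rightarrow> (nat \<Rightarrow> pair) \<Rightarrow> nat \<Rightarrow> pair \<Rightarrow> real" where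
  "p1 L G I \<alpha> J \<beta> p sel j x =
     (let m = max (p2 L G I \<alpha> J \<beta> p sel (j - 1) (sel j)) 0 in
      if p2 L G I \<alpha> J \<beta> p sel (j - 1) x > 0 then
        (if conflict L G I \<alpha> x (sel j) then m else 2 * m * maxbeta J \<beta> x)
      else 0)"

text \<open>Stacks: stk k = S^*_{N-k}; S^*_N = {} and
  S^*_{j-1} = S^*_j \<union> {S_j} if S_j \<noteq> \<emptyset> and this is feasible.\<close>
primrec stk :: "nat \<Rightarrow> (nat \<Rightarrow> nat set) \<Rightarrow> nat set \<Rightarrow> (nat \<Rightarrow> pair \<Rightarrow> real) \<Rightarrow> nat
    \<Rightarrow> (nat \<Rightarrow> pair \<Rightarrow> real) \<Rightarrow> (pair \<Rightarrow> real) \<Rightarrow> (nat \<Rightarrow> pair) \<Rightarrow> nat \<Rightarrow> nat \<Rightarrow> pair set" where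
  "stk L G I \<alpha> J \<beta> p sel N 0 = {}"
| "stk L G I \<alpha> J \<beta> p sel N (Suc k) =
     (let j = N - k; Sj = sel j; F = stk L G I \<alpha> J \<beta> p sel N k in
      if p2 L G I \<alpha> J \<beta> p sel (j - 1) Sj > 0 \<and> feasible L G N J \<beta> I \<alpha> (insert Sj F)
      then insert Sj F else F)"

definition Sstar :: "nat \<Rightarrow> (nat \<Rightarrow> nat set) \<Rightarrow> nat set \<Rightarrow> (nat \<Rightarrow> pair \<Rightarrow> real) \<Rightarrow> nat
    \<Rightarrow> (nat \<Rightarrow> pair \<Rightarrow> real) \<Rightarrow> (pair \<Rightarrow> real) \<Rightarrow> (nat \<Rightarrow> pair) \<Rightarrow> nat \<Rightarrow> nat \<Rightarrow> pair set" where
  "Sstar L G I \<alpha> J \<beta> p sel N i = stk L G I \<alpha> J \<beta> p sel N (N - i)"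

end

theory Submission
  imports Defs
begin

lemma maxbeta_ge:
  assumes "q \<in> {1..J}"
  shows "\<beta> q x \<le> maxbeta J \<beta> x"
proof -
  have "J \<noteq> 0" using assms by auto
  thus ?thesis unfolding maxbeta_def using assms by (auto intro!: Max_ge)
qed

lemma maxbeta_nonneg:
  assumes "\<forall>q\<in>{1..J}. 0 \<le> \<beta> q x"
  shows "0 \<le> maxbeta J \<beta> x"
proof (cases "J = 0")
  case True thus ?thesis by (simp add: maxbeta_def)
next
  case False
  hence "1 \<in> {1..J}" by auto
  thus ?thesis using maxbeta_ge[of 1 J \<beta> x] assms by force
qed

lemma p2_step_le:
  assumes "\<forall>q\<in>{1..J}. 0 \<le> \<beta> q x"
  shows "p2 L G I \<alpha> J \<beta> p sel (Suc k) x \<le> p2 L G I \<alpha> J \<beta> p sel k x"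
proof -
  have "0 \<le> maxbeta J \<beta> x" using maxbeta_nonneg assms by blast
  thus ?thesis by (auto simp: Let_def)
qed

lemma p2_mono:
  assumes "\<forall>q\<in>{1..J}. 0 \<le> \<beta> q x"
  shows "p2 L G I \<alpha> J \<beta> p sel (k + d) x \<le> p2 L G I \<alpha> J \<beta> p sel k x"
proof (induction d)
  case 0 show ?case by simp
next
  case (Suc d)
  have "p2 L G I \<alpha> J \<beta> p sel (Suc (k + d)) x \<le> p2 L G I \<alpha> J \<beta> p sel (k + d) x"
    by (rule p2_step_le) (rule assms)
  thus ?case using Suc by simp
qed

lemma p1_nonneg:
  assumes "\<forall>q\<in>{1..J}. 0 \<le> \<beta> q x"
  shows "0 \<le> p1 L G I \<alpha> J \<beta> p sel j x"
proof -
  have "0 \<le> maxbeta J \<beta> x" using maxbeta_nonneg assms by blast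
  thus ?thesis by (auto simp: p1_def Let_def)
qed

lemma stk_feasible: "feasible L G N J \<beta> I \<alpha> (stk L G I \<alpha> J \<beta> p sel N k)"
proof (induction k)
  case 0 show ?case by (simp add: feasible_def)
next
  case (Suc k) thus ?case by (simp add: Let_def)
qed

lemma stk_finite: "finite (stk L G I \<alpha> J \<beta> p sel N k)"
  by (induction k) (auto simp: Let_def)

lemma stk_elems:
  "k \<le> N \<Longrightarrow> y \<in> stk L G I \<alpha> J \<beta> p sel N k \<Longrightarrow>
    \<exists>i. N - k < i \<and> i \<le> N \<and> y = sel i \<and> p2 L G I \<alpha> J \<beta> p sel (i - 1) (sel i) > 0"
proof (induction k)
  case 0 thus ?case by simp
next
  case (Suc k)
  show ?case
  proof (cases "y \<in> stk L G I \<alpha> J \<beta> p sel N k")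
    case True
    then obtain i where "N - k < i \<and> i \<le> N \<and> y = sel i \<and> p2 L G I \<alpha> J \<beta> p sel (i - 1) (sel i) > 0"
      using Suc by auto
    thus ?thesis by (intro exI[of _ i]) auto
  next
    case False
    with Suc.prems have "y = sel (N - k) \<and> p2 L G I \<alpha> J \<beta> p sel (N - k - 1) (sel (N - k)) > 0"
      by (auto simp: Let_def split: if_splits)
    thus ?thesis using Suc.prems by (intro exI[of _ "N - k"]) auto
  qed
qed

theorem lemma1:
  fixes K L T N J j :: nat
    and G :: "nat \<Rightarrow> nat set"
    and I :: "nat set"
    and p :: "pair \<Rightarrow> real"
    and \<beta> \<alpha> :: "nat \<Rightarrow> pair \<Rightarrow> real"
    and sel :: "nat \<Rightarrow> pair"
  assumes groups_disj: "\<forall>s\<in>{1..L}. \<forall>s'\<in>{1..L}. s \<noteq> s' \<longrightarrow> G s \<inter> G s' = {}"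
    and groups_cover: "(\<Union>s\<in>{1..L}. G s) = {1..K}"
    and p_nonneg: "\<forall>x\<in>pairs K L G T N. p x \<ge> 0"
    and beta_range: "\<forall>q\<in>{1..J}. \<forall>x\<in>pairs K L G T N. 0 \<le> \<beta> q x \<and> \<beta> q x \<le> 1"
    and alpha_range: "\<forall>q\<in>I. \<forall>x\<in>pairs K L G T N. \<alpha> q x \<in> {0, 1}"
    and sel_max: "\<forall>i\<in>{1..N}. sel i \<in> narrow K L G T N J \<beta> \<and> Tail (snd (sel i)) = i \<and>
                   (\<forall>x\<in>narrow K L G T N J \<beta>. Tail (snd x) = i \<longrightarrow>
                      p2 L G I \<alpha> J \<beta> p sel (i - 1) x \<le> p2 L G I \<alpha> J \<beta> p sel (i - 1) (sel i))"
    and j_range: "j \<in> {1..N}"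
    and Sj_nonempty: "p2 L G I \<alpha> J \<beta> p sel (j - 1) (sel j) > 0"
  shows "(\<Sum>x\<in>Sstar L G I \<alpha> J \<beta> p sel N (j - 1). p1 L G I \<alpha> J \<beta> p sel j x)
           \<ge> p2 L G I \<alpha> J \<beta> p sel (j - 1) (sel j)"
proof -
  define P2 where "P2 = p2 L G I \<alpha> J \<beta> p sel"
  define P1 where "P1 = p1 L G I \<alpha> J \<beta> p sel j"
  define F where "F = stk L G I \<alpha> J \<beta> p sel N (N - j)"
  define xs where "xs = sel j"
  define v where "v = P2 (j - 1) xs"
  have vpos: "v > 0" using Sj_nonempty by (simp add: v_def P2_def xs_def)
  have jr: "1 \<le> j" "j \<le> N" using j_range by auto
  have selp: "\<And>i. i \<in> {1..N} \<Longrightarrow> sel i \<in> pairs K L G T N"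
    using sel_max by (auto simp: narrow_def)
  have xsn: "xs \<in> narrow K L G T N J \<beta>" using sel_max j_range by (simp add: xs_def)
  hence xsp: "xs \<in> pairs K L G T N" by (simp add: narrow_def)
  have finF: "finite F" unfolding F_def by (rule stk_finite)
  have feasF: "feasible L G N J \<beta> I \<alpha> F" unfolding F_def by (rule stk_feasible)
  have Fel: "\<And>y. y \<in> F \<Longrightarrow> y \<in> pairs K L G T N \<and> P2 (j - 1) y > 0"
  proof -
    fix y assume "y \<in> F"
    then obtain i where i: "j < i" "i \<le> N" "y = sel i" "P2 (i - 1) (sel i) > 0"
      using stk_elems[of "N - j" N y] jr unfolding F_def P2_def by fastforce
    have yp: "y \<in> pairs K L G T N" using selp i by auto
    have "P2 (j - 1 + (i - j)) y \<le> P2 (j - 1) y"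
      unfolding P2_def by (rule p2_mono) (use beta_range yp in auto)
    moreover have "j - 1 + (i - j) = i - 1" using i jr by auto
    ultimately show "y \<in> pairs K L G T N \<and> P2 (j - 1) y > 0" using i yp by auto
  qed
  have p1nn: "\<And>y. y \<in> pairs K L G T N \<Longrightarrow> 0 \<le> P1 y"
    unfolding P1_def by (rule p1_nonneg) (use beta_range in auto)
  have p1conf: "\<And>y. P2 (j - 1) y > 0 \<Longrightarrow> conflict L G I \<alpha> y xs \<Longrightarrow> P1 y = v"
    using vpos by (simp add: P1_def p1_def v_def P2_def xs_def Let_def)
  have p1nconf: "\<And>y. P2 (j - 1) y > 0 \<Longrightarrow> \<not> conflict L G I \<alpha> y xs \<Longrightarrow> P1 y = 2 * v * maxbeta J \<beta> y"
    using vpos by (simp add: P1_def p1_def v_def P2_def xs_def Let_def)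
  have sumF_ge: "\<And>y. y \<in> F \<Longrightarrow> P1 y \<le> sum P1 F"
    by (rule member_le_sum) (use p1nn Fel finF in auto)
  have SS: "Sstar L G I \<alpha> J \<beta> p sel N (j - 1) =
      (if P2 (j - 1) xs > 0 \<and> feasible L G N J \<beta> I \<alpha> (insert xs F) then insert xs F else F)"
  proof -
    have "N - (j - 1) = Suc (N - j)" using jr by auto
    moreover have "N - (N - j) = j" using jr by auto
    ultimately show ?thesis by (simp add: Sstar_def F_def P2_def xs_def Let_def)
  qed
  have goal: "sum P1 (Sstar L G I \<alpha> J \<beta> p sel N (j - 1)) \<ge> v"
  proof (cases "feasible L G N J \<beta> I \<alpha> (insert xs F)")
    case True
    have "fst xs \<in> Uset K L G T" using xsp by (auto simp: pairs_def mem_Times_iff)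
    hence "fst xs \<noteq> {}" "fst xs \<subseteq> {1..K}" by (auto simp: Uset_def)
    then obtain u where "u \<in> fst xs" "u \<in> {1..K}" by blast
    then obtain s where "s \<in> {1..L}" "u \<in> G s" using groups_cover \<open>u \<in> {1..K}\<close> by (metis UN_iff)
    hence "conflict L G I \<alpha> xs xs" using \<open>u \<in> fst xs\<close> unfolding conflict_def by blast
    hence "P1 xs = v" using p1conf vpos v_def by auto
    moreover have "P1 xs \<le> sum P1 (insert xs F)"
      by (rule member_le_sum) (use p1nn Fel finF xsp in auto)
    ultimately show ?thesis using SS True vpos v_def by auto
  next
    case False
    hence SF: "Sstar L G I \<alpha> J \<beta> p sel N (j - 1) = F" using SS by auto
    have xsF: "xs \<notin> F" using False feasF by (auto simp: insert_absorb)
    show ?thesis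
    proof (cases "\<exists>y\<in>F. conflict L G I \<alpha> y xs")
      case True
      then obtain y where "y \<in> F" "conflict L G I \<alpha> y xs" by auto
      thus ?thesis using SF sumF_ge p1conf Fel by fastforce
    next
      case False
      have nc: "\<And>y. y \<in> F \<Longrightarrow> \<not> conflict L G I \<alpha> y xs" using False by auto
      have grp: "\<forall>s\<in>{1..L}. card {x\<in>insert xs F. G s \<inter> fst x \<noteq> {}} \<le> 1"
      proof
        fix s assume s: "s \<in> {1..L}"
        show "card {x\<in>insert xs F. G s \<inter> fst x \<noteq> {}} \<le> 1"
        proof (cases "G s \<inter> fst xs \<noteq> {}")
          case True
          have "{x\<in>insert xs F. G s \<inter> fst x \<noteq> {}} = {xs}"
            using True nc s unfolding conflict_def by blast
          thus ?thesis by simp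
        next
          case False
          have "{x\<in>insert xs F. G s \<inter> fst x \<noteq> {}} = {x\<in>F. G s \<inter> fst x \<noteq> {}}"
            using False by auto
          thus ?thesis using feasF s by (simp add: feasible_def)
        qed
      qed
      have rb: "\<forall>r\<in>{1..N}. card {x\<in>insert xs F. r \<in> snd x} \<le> 1"
      proof
        fix r assume r: "r \<in> {1..N}"
        show "card {x\<in>insert xs F. r \<in> snd x} \<le> 1"
        proof (cases "r \<in> snd xs")
          case True
          have "{x\<in>insert xs F. r \<in> snd x} = {xs}"
            using True nc unfolding conflict_def by blast
          thus ?thesis by simp
        next
          case False
          have "{x\<in>insert xs F. r \<in> snd x} = {x\<in>F. r \<in> snd x}"
            using False by auto
          thus ?thesis using feasF r by (simp add: feasible_def)
        qed
      qed
      have al: "\<forall>q\<in>I. (\<Sum>x\<in>insert xs F. \<alpha> q x) \<le> 1"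
      proof
        fix q assume q: "q \<in> I"
        have eq: "(\<Sum>x\<in>insert xs F. \<alpha> q x) = \<alpha> q xs + (\<Sum>x\<in>F. \<alpha> q x)"
          using finF xsF by simp
        show "(\<Sum>x\<in>insert xs F. \<alpha> q x) \<le> 1"
        proof (cases "\<alpha> q xs = 1")
          case True
          have "\<And>y. y \<in> F \<Longrightarrow> \<alpha> q y = 0"
          proof -
            fix y assume y: "y \<in> F"
            have "\<alpha> q y \<in> {0,1}" using alpha_range q Fel y by blast
            moreover have "\<alpha> q y \<noteq> 1" using nc[OF y] True q unfolding conflict_def by blast
            ultimately show "\<alpha> q y = 0" by auto
          qed
          thus ?thesis using eq True by simp
        next
          case False
          hence "\<alpha> q xs = 0" using alpha_range q xsp by blast
          thus ?thesis using eq feasF q by (simp add: feasible_def)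
        qed
      qed
      obtain q where q: "q \<in> {1..J}" and bq: "(\<Sum>x\<in>insert xs F. \<beta> q x) > 1"
        using \<open>\<not> feasible L G N J \<beta> I \<alpha> (insert xs F)\<close> grp rb al
        unfolding feasible_def by force
      have "\<beta> q xs \<le> 1/2" using xsn q by (simp add: narrow_def)
      moreover have "(\<Sum>x\<in>insert xs F. \<beta> q x) = \<beta> q xs + (\<Sum>x\<in>F. \<beta> q x)"
        using finF xsF by simp
      ultimately have bF: "(\<Sum>x\<in>F. \<beta> q x) > 1/2" using bq by linarith
      have "(\<Sum>x\<in>F. 2 * v * \<beta> q x) \<le> (\<Sum>x\<in>F. P1 x)"
      proof (rule sum_mono)
        fix y assume y: "y \<in> F"
        have "P1 y = 2 * v * maxbeta J \<beta> y" using p1nconf Fel nc y by blast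
        moreover have "\<beta> q y \<le> maxbeta J \<beta> y" using maxbeta_ge q by blast
        ultimately show "2 * v * \<beta> q y \<le> P1 y" using vpos by simp
      qed
      moreover have "(\<Sum>x\<in>F. 2 * v * \<beta> q x) = 2 * v * (\<Sum>x\<in>F. \<beta> q x)"
        by (simp add: sum_distrib_left)
      moreover have "2 * v * (\<Sum>x\<in>F. \<beta> q x) \<ge> v" using bF vpos by (simp add: mult_left_mono[of "1/2" _ "2*v", simplified])
      ultimately have "v \<le> sum P1 F" by linarith
      thus ?thesis using SF by simp
    qed
  qed
  thus ?thesis by (simp add: P1_def v_def P2_def xs_def)
qed

end
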